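(* In any execution of Algorithm FS, let $v\in V_A^0$ and let $t$ be a round such that $c_t(v)\ge c_t(w)$ for every node $w\ne v$ active in round $t$. Then for every round $t'>t$ and every node $w$ active in round $t'$, $c_{t'}(v)\ge c_{t'}(w)$.
   Context: Model (beeping model with arbitrary activations). $G=(V,E)$ finite connected undirected graph; synchronous rounds; in each round each active node either beeps or listens; a listening node learns only whether at least one neighbor beeped. $T\ge 4$; checkpoints $\mathit{CP}=\{c\in\mathbb{N}_0: c\equiv 0\pmod 4,\ T-c>3\}$. Algorithm FS. Each node $v$ stores $\delta(v)\in\{0,\dots,T-1\}$, $\mathit{State}(v)\in\{\mathit{Inactive},\mathit{Beep},\mathit{Listen}\}$, $\mathit{Induced}(v)\in\{\mathit{true},\mathit{false}\}$. Initially all nodes are Inactive. A node $v$ is activated in round $t$ if the adversary activates it in round $t$, or $v$ is inactive and some neighbor beeps in round $t-1$; then at the beginning of round $t$, $\delta(v)=1$, $\mathit{State}(v)=\mathit{Beep}$, $\mathit{Induced}(v)=\mathit{true}$. In each round each active node $v$, according to its state at the beginning of the round: (1) if $\mathit{State}(v)=\mathit{Beep}$: beeps; $\delta(v)\gets\delta(v)+1\bmod T$; $\mathit{State}(v)\gets\mathit{Listen}$; (2) if $\mathit{State}(v)=\mathit{Listen}$ and some neighbor beeps: if $\delta(v)\equiv c-1\pmod T$ for some $c\in\mathit{CP}$, then $\delta(v)\gets\delta(v)+2\bmod T$, $\mathit{State}(v)\gets\mathit{Beep}$, $\mathit{Induced}(v)\gets\mathit{true}$; else $\delta(v)\gets\delta(v)+1\bmod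 T$; (3) if $\mathit{State}(v)=\mathit{Listen}$ and no neighbor beeps: $\delta(v)\gets\delta(v)+1\bmod T$; then if ($\mathit{Induced}(v)=\mathit{true}$ and new $\delta(v)\in\mathit{CP}$) or new $\delta(v)=0$: $\mathit{State}(v)\gets\mathit{Beep}$, $\mathit{Induced}(v)\gets\mathit{false}$. Rounds are numbered so that round $0$ is the first round at whose beginning some node is active; $V_A^0$ is the set of nodes activated by the adversary in round $0$. Virtual counter: if $v$ is activated in round $t_0$ then $c_{t_0}(v)=0$, and $c_{t+1}(v)=c_t(v)+a$, where $a\in\{1,2\}$ is the amount added to $\delta(v)$ (before reduction mod $T$) in round $t$. *)

theory Defs
  imports Main "HOL-Number_Theory.Cong"
begin

datatype nstate = Inactive | Beep | Listen

record 'v cfg =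
  dlt :: "'v \<Rightarrow> nat"
  st  :: "'v \<Rightarrow> nstate"
  ind :: "'v \<Rightarrow> bool"
  cnt :: "'v \<Rightarrow> nat"

definition CP :: "nat \<Rightarrow> nat set" where
  "CP T = {c. c mod 4 = 0 \<and> int T - int c > 3}"

definition heard :: "('v \<Rightarrow> 'v \<Rightarrow> bool) \<Rightarrow> 'v cfg \<Rightarrow> 'v \<Rightarrow> bool" where
  "heard E C v = (\<exists>u. E u v \<and> st C u = Beep)"

definition step :: "nat \<Rightarrow> ('v \<Rightarrow> 'v \<Rightarrow> bool) \<Rightarrow> 'v cfg \<Rightarrow> 'v cfg" where
  "step T E C =
    \<lparr> dlt = (\<lambda>v. case st C v of
               Inactive \<Rightarrow> dlt C v
             | Beep \<Rightarrow> (dlt C v + 1) mod T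
             | Listen \<Rightarrow>
                 (if heard E C v \<and> (\<exists>c\<in>CP T. [int (dlt C v) = int c - 1] (mod int T))
                  then (dlt C v + 2) mod T else (dlt C v + 1) mod T)),
      st = (\<lambda>v. case st C v of
               Inactive \<Rightarrow> Inactive
             | Beep \<Rightarrow> Listen
             | Listen \<Rightarrow>
                 (if heard E C v then
                    (if (\<exists>c\<in>CP T. [int (dlt C v) = int c - 1] (mod int T)) then Beep else Listen)
                  else
                    (if (ind C v \<and> (dlt C v + 1) mod T \<in> CP T) \<or> (dlt C v + 1) mod T = 0
                     then Beep else Listen))),
      ind = (\<lambda>v. case st C v of
               Inactive \<Rightarrow> ind C v
             | Beep \<Rightarrow> ind C v
             | Listen \<Rightarrow>
                 (if heard E C v then
                    (if (\<exists>c\<in>CP T. [int (dlt C v) = int c - 1] (mod int T)) then True else ind C v)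
                  else
                    (if (ind C v \<and> (dlt C v + 1) mod T \<in> CP T) \<or> (dlt C v + 1) mod T = 0
                     then False else ind C v))),
      cnt = (\<lambda>v. case st C v of
               Inactive \<Rightarrow> cnt C v
             | Beep \<Rightarrow> cnt C v + 1
             | Listen \<Rightarrow>
                 (if heard E C v \<and> (\<exists>c\<in>CP T. [int (dlt C v) = int c - 1] (mod int T))
                  then cnt C v + 2 else cnt C v + 1)) \<rparr>"

definition activate :: "('v \<Rightarrow> bool) \<Rightarrow> 'v cfg \<Rightarrow> 'v cfg" where
  "activate act C =
    \<lparr> dlt = (\<lambda>v. if st C v = Inactive \<and> act v then 1 else dlt C v),
      st  = (\<lambda>v. if st C v = Inactive \<and> act v then Beep else st C v),
      ind = (\<lambda>v. if st C v = Inactive \<and> act v then True else ind C v),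
      cnt = (\<lambda>v. if st C v = Inactive \<and> act v then 0 else cnt C v) \<rparr>"

definition init_cfg :: "'v cfg" where
  "init_cfg = \<lparr> dlt = (\<lambda>_. 0), st = (\<lambda>_. Inactive), ind = (\<lambda>_. False), cnt = (\<lambda>_. 0) \<rparr>"

(* exec T E adv t = configuration at the beginning of round t (after activations of round t);
   adv t = set of nodes the adversary activates in round t *)
primrec exec :: "nat \<Rightarrow> ('v \<Rightarrow> 'v \<Rightarrow> bool) \<Rightarrow> (nat \<Rightarrow> 'v set) \<Rightarrow> nat \<Rightarrow> 'v cfg" where
  "exec T E adv 0 = activate (\<lambda>v. v \<in> adv 0) init_cfg"
| "exec T E adv (Suc t) =
     activate (\<lambda>v. v \<in> adv (Suc t) \<or> heard E (exec T E adv t) v) (step T E (exec T E adv t))"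

definition active :: "nat \<Rightarrow> ('v \<Rightarrow> 'v \<Rightarrow> bool) \<Rightarrow> (nat \<Rightarrow> 'v set) \<Rightarrow> nat \<Rightarrow> 'v \<Rightarrow> bool" where
  "active T E adv t v = (st (exec T E adv t) v \<noteq> Inactive)"

end

theory Submission imports Defs begin

definition J :: "nat \<Rightarrow> nat \<Rightarrow> bool" where
  "J T d = (\<exists>c\<in>CP T. [int d = int c - 1] (mod int T))"

lemma Jchar:
  assumes "T \<ge> 4" "d < T"
  shows "J T d \<longleftrightarrow> (\<exists>c. c mod 4 = 0 \<and> c + 4 \<le> T \<and> ((c \<ge> 1 \<and> d = c - 1) \<or> (c = 0 \<and> d = T - 1)))"
proof
  assume "J T d"
  then obtain c where c: "c \<in> CP T" "[int d = int c - 1] (mod int T)" unfolding J_def by blast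
  from c(1) have c1: "c mod 4 = 0" "c + 4 \<le> T" unfolding CP_def by auto
  show "\<exists>c. c mod 4 = 0 \<and> c + 4 \<le> T \<and> ((c \<ge> 1 \<and> d = c - 1) \<or> (c = 0 \<and> d = T - 1))"
  proof (cases "c = 0")
    case True
    with c(2) have "int d mod int T = (-1) mod int T" by (simp add: cong_def)
    also have "\<dots> = int T - 1" using assms by (simp add: zmod_minus1)
    finally have "d = T - 1" using assms by simp
    with True c1 show ?thesis by (intro exI[of _ 0]) auto
  next
    case False
    have "int d mod int T = int d" using assms by simp
    moreover have "(int c - 1) mod int T = int c - 1" using False c1 by (simp add: mod_pos_pos_trivial)
    ultimately have "int d = int c - 1" using c(2) by (simp add: cong_def)
    with False c1 show ?thesis by (intro exI[of _ c]) auto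
  qed
next
  assume "\<exists>c. c mod 4 = 0 \<and> c + 4 \<le> T \<and> ((c \<ge> 1 \<and> d = c - 1) \<or> (c = 0 \<and> d = T - 1))"
  then obtain c where c: "c mod 4 = 0" "c + 4 \<le> T" "(c \<ge> 1 \<and> d = c - 1) \<or> (c = 0 \<and> d = T - 1)" by metis
  have cp: "c \<in> CP T" using c unfolding CP_def by auto
  from c(3) have "[int d = int c - 1] (mod int T)"
  proof
    assume "c \<ge> 1 \<and> d = c - 1" then show ?thesis by (simp add: of_nat_diff)
  next
    assume h: "c = 0 \<and> d = T - 1"
    have "int d = (-1) + 1 * int T" using h assms by simp
    then show ?thesis using h by (simp add: cong_def)
  qed
  with cp show "J T d" unfolding J_def by blast
qed

definition Bs :: "nat \<Rightarrow> nat set" where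
  "Bs T = CP T \<union> Suc ` CP T"

lemma Bs_char: "d \<in> Bs T \<longleftrightarrow> (\<exists>c. c mod 4 = 0 \<and> c + 4 \<le> T \<and> (d = c \<or> d = Suc c))"
  unfolding Bs_def CP_def image_def by force

lemma F1: assumes "T \<ge> 4" "d \<in> Bs T" shows "\<not> J T d"
proof -
  have "d < T" using assms(2) unfolding Bs_char by auto
  obtain c where c: "c mod 4 = 0" "c + 4 \<le> T" "d = c \<or> d = Suc c" using assms(2) unfolding Bs_char by metis
  show ?thesis unfolding Jchar[OF assms(1) \<open>d < T\<close>]
  proof
    assume "\<exists>c. c mod 4 = 0 \<and> c + 4 \<le> T \<and> (1 \<le> c \<and> d = c - 1 \<or> c = 0 \<and> d = T - 1)"
    then obtain c' where "c' mod 4 = 0" "c' + 4 \<le> T" "(1 \<le> c' \<and> d = c' - 1 \<or> c' = 0 \<and> d = T - 1)" by metis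
    then show False using c by presburger
  qed
qed

lemma F2: assumes "T \<ge> 4" "d \<in> Bs T" shows "\<not> J T ((d + 1) mod T)"
proof -
  have "d < T" using assms(2) unfolding Bs_char by auto
  have e: "(d+1) mod T = d + 1" using assms(2) unfolding Bs_char by auto
  have "(d+1) mod T < T" using assms by simp
  obtain c where c: "c mod 4 = 0" "c + 4 \<le> T" "d = c \<or> d = Suc c" using assms(2) unfolding Bs_char by metis
  show ?thesis
  proof
    assume "J T ((d + 1) mod T)"
    then obtain c' where "c' mod 4 = 0" "c' + 4 \<le> T" "(1 \<le> c' \<and> d + 1 = c' - 1 \<or> c' = 0 \<and> d + 1 = T - 1)"
      using Jchar[OF assms(1) \<open>(d+1) mod T < T\<close>] e by metis
    then show False using c by presburger
  qed
qed

lemma F3: assumes "T \<ge> 4" "d < T" "J T ((d + 1) mod T)" shows "\<not> J T d"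
proof
  assume "J T d"
  have m: "(d+1) mod T < T" using assms by simp
  show False
  proof (cases "d + 1 = T")
    case True
    then have "(d+1) mod T = 0" by simp
    with assms(3) Jchar[OF assms(1) m] show False by auto
  next
    case False
    then have "(d+1) mod T = d + 1" using assms by simp
    obtain c where c: "c mod 4 = 0" "c + 4 \<le> T" "(c \<ge> 1 \<and> d = c - 1) \<or> (c = 0 \<and> d = T - 1)"
      using \<open>J T d\<close> Jchar[OF assms(1) assms(2)] by metis
    obtain c' where c': "c' mod 4 = 0" "c' + 4 \<le> T" "(c' \<ge> 1 \<and> d + 1 = c' - 1) \<or> (c' = 0 \<and> d + 1 = T - 1)"
    proof -
      have j: "J T (d+1)" using assms(3) \<open>(d+1) mod T = d + 1\<close> by simp
      have "d + 1 < T" using m \<open>(d+1) mod T = d + 1\<close> by simp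
      show ?thesis using j Jchar[OF assms(1) \<open>d+1 < T\<close>] that by metis
    qed
    show False using c c' False by presburger
  qed
qed

lemma F4: assumes "T \<ge> 4" "e < T" "J T e" shows "e \<notin> CP T" "e \<noteq> 0"
proof -
  obtain c where c: "c mod 4 = 0" "c + 4 \<le> T" "(c \<ge> 1 \<and> e = c - 1) \<or> (c = 0 \<and> e = T - 1)"
    using assms Jchar[OF assms(1) assms(2)] by metis
  then show "e \<notin> CP T" "e \<noteq> 0" unfolding CP_def using assms(1) by (auto, presburger+)
qed

lemma F5: assumes "T \<ge> 4" "d < T" "J T d" shows "(d + 2) mod T \<in> Bs T"
proof -
  from assms Jchar[OF assms(1) assms(2)] obtain c where c: "c mod 4 = 0" "c + 4 \<le> T" "(c \<ge> 1 \<and> d = c - 1) \<or> (c = 0 \<and> d = T - 1)" by metis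
  then have "(d+2) mod T = c + 1"
  proof (cases "c = 0")
    case True
    then have "d + 2 = 1 + T" using c assms by auto
    moreover have "(1 + T) mod T = 1 mod T" by (rule mod_add_self2)
    moreover have "1 mod T = 1" using assms by simp
    ultimately show ?thesis using True by simp
  next
    case False
    then show ?thesis using c assms by auto
  qed
  then show ?thesis unfolding Bs_char using c by (intro exI[of _ c]) auto
qed


definition inc :: "nat \<Rightarrow> ('v \<Rightarrow> 'v \<Rightarrow> bool) \<Rightarrow> 'v cfg \<Rightarrow> 'v \<Rightarrow> nat" where
  "inc T E C x = (if st C x = Listen \<and> heard E C x \<and> J T (dlt C x) then 2 else 1)"

lemma step_cnt: "st C x \<noteq> Inactive \<Longrightarrow> cnt (step T E C) x = cnt C x + inc T E C x"
  by (cases "st C x") (auto simp: step_def inc_def J_def)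

lemma step_dlt: "st C x \<noteq> Inactive \<Longrightarrow> dlt (step T E C) x = (dlt C x + inc T E C x) mod T"
  by (cases "st C x") (auto simp: step_def inc_def J_def)

lemma step_inact: "st (step T E C) x = Inactive \<longleftrightarrow> st C x = Inactive"
  by (cases "st C x") (auto simp: step_def)

lemma step_beep: "st (step T E C) x = Beep \<longleftrightarrow> (st C x = Listen \<and> (if heard E C x then J T (dlt C x)
    else ((ind C x \<and> (dlt C x+1) mod T \<in> CP T) \<or> (dlt C x+1) mod T = 0)))"
  by (cases "st C x") (auto simp: step_def J_def)

lemma act_old: "st C x \<noteq> Inactive \<Longrightarrow> st (activate a C) x = st C x \<and> dlt (activate a C) x = dlt C x \<and> cnt (activate a C) x = cnt C x"
  by (simp add: activate_def)

lemma act_new: "st C x = Inactive \<Longrightarrow> a x \<Longrightarrow> st (activate a C) x = Beep \<and> dlt (activate a C) x = 1 \<and> cnt (activate a C) x = 0"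
  by (simp add: activate_def)

lemma act_inact: "st C x = Inactive \<Longrightarrow> \<not> a x \<Longrightarrow> st (activate a C) x = Inactive"
  by (simp add: activate_def)

definition inv :: "nat \<Rightarrow> ('v \<Rightarrow> 'v \<Rightarrow> bool) \<Rightarrow> 'v cfg \<Rightarrow> bool" where
  "inv T E C = (
   (\<forall>x. st C x \<noteq> Inactive \<longrightarrow> dlt C x = (cnt C x + 1) mod T) \<and>
   (\<forall>x. st C x = Beep \<longrightarrow> dlt C x \<in> Bs T) \<and>
   (\<forall>x y. E x y \<longrightarrow> st C x \<noteq> Inactive \<longrightarrow> st C y = Inactive \<longrightarrow> st C x = Beep \<and> cnt C x = 0) \<and>
   (\<forall>x y. E x y \<longrightarrow> st C x \<noteq> Inactive \<longrightarrow> st C y \<noteq> Inactive \<longrightarrow>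
      cnt C y \<le> cnt C x + 2 \<and> (cnt C y = cnt C x + 2 \<longrightarrow> st C y = Beep \<and> st C x = Listen \<and> J T (dlt C x))))"

lemma one_Bs: "T \<ge> 4 \<Longrightarrow> 1 \<in> Bs T"
  unfolding Bs_char by (intro exI[of _ 0]) auto

lemma zero_CP: "T \<ge> 4 \<Longrightarrow> 0 \<in> CP T"
  unfolding CP_def by auto

lemma inv0: assumes "T \<ge> 4" shows "inv T E (exec T E adv 0)"
  using assms one_Bs[OF assms]
  by (auto simp: inv_def activate_def init_cfg_def)


lemma inv_step:
  assumes T4: "T \<ge> 4" and sym: "\<And>x y. E x y \<Longrightarrow> E y x"
    and I: "inv T E C" and ha: "\<And>x. heard E C x \<Longrightarrow> a x"
  shows "inv T E (activate a (step T E C))"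
proof -
  define D where "D = step T E C"
  define C' where "C' = activate a D"
  have IA: "\<And>x. st C x \<noteq> Inactive \<Longrightarrow> dlt C x = (cnt C x + 1) mod T"
   and IB: "\<And>x. st C x = Beep \<Longrightarrow> dlt C x \<in> Bs T"
   and IC: "\<And>x y. E x y \<Longrightarrow> st C x \<noteq> Inactive \<Longrightarrow> st C y = Inactive \<Longrightarrow> st C x = Beep \<and> cnt C x = 0"
   and ID: "\<And>x y. E x y \<Longrightarrow> st C x \<noteq> Inactive \<Longrightarrow> st C y \<noteq> Inactive \<Longrightarrow>
      cnt C y \<le> cnt C x + 2 \<and> (cnt C y = cnt C x + 2 \<longrightarrow> st C y = Beep \<and> st C x = Listen \<and> J T (dlt C x))"
    using I unfolding inv_def by blast+
  have Tpos: "T > 0" using T4 by simp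
  have old: "st C' x = st D x \<and> dlt C' x = dlt D x \<and> cnt C' x = cnt C x + inc T E C x
      \<and> dlt C' x = (dlt C x + inc T E C x) mod T \<and> st C' x \<noteq> Inactive"
    if "st C x \<noteq> Inactive" for x
    using that act_old[of D x a] step_inact[of T E C x] step_cnt[OF that, of T E] step_dlt[OF that, of T E]
    unfolding C'_def D_def by auto
  have new: "st C' x = Beep \<and> dlt C' x = 1 \<and> cnt C' x = 0"
    if "st C x = Inactive" "st C' x \<noteq> Inactive" for x
  proof -
    have "st D x = Inactive" using that step_inact unfolding D_def by metis
    moreover have "a x" using that act_inact[OF \<open>st D x = Inactive\<close>] unfolding C'_def by blast
    ultimately show ?thesis using act_new unfolding C'_def by metis
  qed
  have inact: "st C x = Inactive \<and> \<not> a x" if "st C' x = Inactive" for x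
    using that old[of x] act_new[of D x a] step_inact[of T E C x] unfolding C'_def D_def by auto
  have inc12: "inc T E C x = 1 \<or> inc T E C x = 2" for x unfolding inc_def by auto
  have dltlt: "dlt C x < T" if "st C x \<noteq> Inactive" for x using IA[OF that] Tpos by simp
  have dltinc: "(dlt C x + k) mod T = (cnt C x + 1 + k) mod T" if "st C x \<noteq> Inactive" for x k
    using IA[OF that] by (simp add: mod_add_left_eq)
  have PA: "dlt C' x = (cnt C' x + 1) mod T" if "st C' x \<noteq> Inactive" for x
  proof (cases "st C x = Inactive")
    case True then show ?thesis using new[OF True that] T4 by simp
  next
    case False then show ?thesis using old[OF False] dltinc[OF False] by (simp add: add.commute add.left_commute)
  qed
  have PB: "dlt C' x \<in> Bs T" if "st C' x = Beep" for x
  proof (cases "st C x = Inactive")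
    case True then show ?thesis using new[OF True] that one_Bs[OF T4] by simp
  next
    case False
    have sD: "st D x = Beep" using old[OF False] that by simp
    then have L: "st C x = Listen" and H: "if heard E C x then J T (dlt C x)
        else ((ind C x \<and> (dlt C x+1) mod T \<in> CP T) \<or> (dlt C x+1) mod T = 0)"
      using step_beep unfolding D_def by metis+
    show ?thesis
    proof (cases "heard E C x")
      case True
      then have j: "J T (dlt C x)" using H by simp
      then have "inc T E C x = 2" using True L unfolding inc_def by simp
      then have e: "dlt C' x = (dlt C x + 2) mod T" using old[OF False] by simp
      show ?thesis unfolding e using F5[OF T4 dltlt[OF False] j] .
    next
      case hf: False
      then have i1: "inc T E C x = 1" unfolding inc_def by simp
      have "(dlt C x+1) mod T \<in> CP T" using H hf zero_CP[OF T4] by (auto split: if_splits)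
      have e: "dlt C' x = (dlt C x + 1) mod T" using old[OF False] i1 by simp
      show ?thesis unfolding e Bs_def using \<open>(dlt C x+1) mod T \<in> CP T\<close> by simp
    qed
  qed
  have PC: "st C' x = Beep \<and> cnt C' x = 0"
    if "E x y" "st C' x \<noteq> Inactive" "st C' y = Inactive" for x y
  proof (cases "st C x = Inactive")
    case True then show ?thesis using new[OF True that(2)] by simp
  next
    case False
    have "st C y = Inactive" "\<not> a y" using inact[OF that(3)] by auto
    then have "\<not> heard E C y" using ha by blast
    moreover have "st C x = Beep" using IC[OF that(1) False \<open>st C y = Inactive\<close>] by simp
    ultimately show ?thesis using that(1) unfolding heard_def by blast
  qed
  have PD: "cnt C' y \<le> cnt C' x + 2 \<and> (cnt C' y = cnt C' x + 2 \<longrightarrow> st C' y = Beep \<and> st C' x = Listen \<and> J T (dlt C' x))"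
    if exy: "E x y" and ax: "st C' x \<noteq> Inactive" and ay: "st C' y \<noteq> Inactive" for x y
  proof (cases "st C y = Inactive")
    case True
    then show ?thesis using new[OF True ay] by simp
  next
    case yo: False
    show ?thesis
    proof (cases "st C x = Inactive")
      case True
      have "st C y = Beep \<and> cnt C y = 0" using IC[OF sym[OF exy] yo True] .
      then have "inc T E C y = 1" unfolding inc_def by simp
      then show ?thesis using new[OF True ax] old[OF yo] \<open>st C y = Beep \<and> cnt C y = 0\<close> by simp
    next
      case xo: False
      have d: "cnt C y \<le> cnt C x + 2" "cnt C y = cnt C x + 2 \<longrightarrow> st C y = Beep \<and> st C x = Listen \<and> J T (dlt C x)"
        using ID[OF exy xo yo] by auto
      have cx: "cnt C' x = cnt C x + inc T E C x" and cy: "cnt C' y = cnt C y + inc T E C y"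
        using old[OF xo] old[OF yo] by auto
      show ?thesis
      proof (cases "cnt C y = cnt C x + 2")
        case True
        then have yb: "st C y = Beep" and xl: "st C x = Listen" and jx: "J T (dlt C x)" using d by auto
        have "heard E C x" using sym[OF exy] yb unfolding heard_def by blast
        then have "inc T E C x = 2" using xl jx unfolding inc_def by simp
        moreover have "inc T E C y = 1" using yb unfolding inc_def by simp
        ultimately show ?thesis using cx cy True by simp
      next
        case ne: False
        show ?thesis
        proof (cases "cnt C y = cnt C x + 1 \<and> inc T E C y = 2 \<and> inc T E C x = 1")
          case False
          then show ?thesis using cx cy d(1) ne inc12[of x] inc12[of y] by auto
        next
          case True
          then have b: "cnt C y = cnt C x + 1" and iy: "inc T E C y = 2" and ix: "inc T E C x = 1" by auto
          have yl: "st C y = Listen" and hy: "heard E C y" and jy: "J T (dlt C y)"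
            using iy unfolding inc_def by (auto split: if_splits)
          have dy: "dlt C y = (dlt C x + 1) mod T"
            using IA[OF yo] dltinc[OF xo, of 1] b by simp
          have njx: "\<not> J T (dlt C x)" using F3[OF T4 dltlt[OF xo]] jy dy by simp
          have xnb: "st C x \<noteq> Beep" using IB F2[OF T4] jy dy by metis
          then have xl: "st C x = Listen" using xo by (cases "st C x") auto
          have "st D x \<noteq> Beep"
          proof
            assume "st D x = Beep"
            then have H: "if heard E C x then J T (dlt C x)
              else ((ind C x \<and> (dlt C x+1) mod T \<in> CP T) \<or> (dlt C x+1) mod T = 0)"
              using step_beep unfolding D_def by metis
            have "(dlt C x + 1) mod T < T" using Tpos by simp
            then have "(dlt C x + 1) mod T \<notin> CP T" "(dlt C x + 1) mod T \<noteq> 0"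
              using F4[OF T4 _ ] jy dy by metis+
            then show False using H njx by (auto split: if_splits)
          qed
          have sDi: "st D x \<noteq> Inactive" using step_inact[of T E C x] xo unfolding D_def by simp
          have "st C' x = Listen" using old[OF xo] \<open>st D x \<noteq> Beep\<close> sDi by (cases "st D x") auto
          moreover have "st C' y = Beep"
            using old[OF yo] step_beep[of T E C y] yl hy jy unfolding D_def by simp
          moreover have "dlt C' x = dlt C y" using old[OF xo] ix dy by simp
          ultimately show ?thesis using jy cx cy b iy ix by simp
        qed
      qed
    qed
  qed
  show ?thesis unfolding C'_def[symmetric] D_def[symmetric] inv_def
    using PA PB PC PD by blast
qed


lemma inv_exec:
  assumes T4: "T \<ge> 4" and sym: "\<And>x y. E x y \<Longrightarrow> E y x"
  shows "inv T E (exec T E adv r)"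
proof (induction r)
  case 0 show ?case using inv0[OF T4] .
next
  case (Suc r) show ?case
    using inv_step[OF T4 sym Suc, of "\<lambda>v. v \<in> adv (Suc r) \<or> heard E (exec T E adv r) v"] by simp
qed

lemma max_step:
  assumes T4: "T \<ge> 4" and sym: "\<And>x y. E x y \<Longrightarrow> E y x"
    and I: "inv T E C"
    and av: "st C v \<noteq> Inactive"
    and mx: "\<And>w. st C w \<noteq> Inactive \<Longrightarrow> cnt C w \<le> cnt C v"
    and aw: "st (activate a (step T E C)) w \<noteq> Inactive"
  shows "cnt (activate a (step T E C)) w \<le> cnt (activate a (step T E C)) v"
proof -
  define C' where "C' = activate a (step T E C)"
  have IA: "\<And>x. st C x \<noteq> Inactive \<Longrightarrow> dlt C x = (cnt C x + 1) mod T"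
   and IB: "\<And>x. st C x = Beep \<Longrightarrow> dlt C x \<in> Bs T"
   and ID: "\<And>x y. E x y \<Longrightarrow> st C x \<noteq> Inactive \<Longrightarrow> st C y \<noteq> Inactive \<Longrightarrow>
      cnt C y \<le> cnt C x + 2 \<and> (cnt C y = cnt C x + 2 \<longrightarrow> st C y = Beep \<and> st C x = Listen \<and> J T (dlt C x))"
    using I unfolding inv_def by blast+
  have oldc: "cnt C' x = cnt C x + inc T E C x" if "st C x \<noteq> Inactive" for x
    using that act_old[of "step T E C" x a] step_inact[of T E C x] step_cnt[OF that, of T E]
    unfolding C'_def by auto
  have cv: "cnt C' v \<ge> cnt C v + 1" using oldc[OF av] unfolding inc_def by simp
  show ?thesis unfolding C'_def[symmetric]
  proof (cases "st C w = Inactive")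
    case True
    have "st (step T E C) w = Inactive" using True step_inact by metis
    moreover have "a w" using aw act_inact[OF \<open>st (step T E C) w = Inactive\<close>] by blast
    ultimately have "cnt C' w = 0" using act_new unfolding C'_def by metis
    then show "cnt C' w \<le> cnt C' v" by simp
  next
    case wo: False
    show "cnt C' w \<le> cnt C' v"
    proof (cases "inc T E C w = 2 \<and> cnt C w = cnt C v")
      case False
      then show ?thesis using oldc[OF wo] cv mx[OF wo] unfolding inc_def by (auto split: if_splits)
    next
      case True
      then have wl: "st C w = Listen" and hw: "heard E C w" and jw: "J T (dlt C w)"
        and eq: "cnt C w = cnt C v" unfolding inc_def by (auto split: if_splits)
      obtain u where eu: "E u w" and ub: "st C u = Beep" using hw unfolding heard_def by blast
      have uo: "st C u \<noteq> Inactive" using ub by simp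
      have "cnt C u \<le> cnt C v" using mx[OF uo] .
      moreover have "cnt C w \<le> cnt C u + 2" "cnt C w \<noteq> cnt C u + 2"
        using ID[OF eu uo wo] wl by auto
      ultimately have "cnt C w = cnt C u \<or> cnt C w = cnt C u + 1" using eq by auto
      then show ?thesis
      proof
        assume "cnt C w = cnt C u"
        then have "dlt C w = dlt C u" using IA[OF wo] IA[OF uo] by simp
        then show ?thesis using F1[OF T4 IB[OF ub]] jw by simp
      next
        assume h: "cnt C w = cnt C u + 1"
        have "dlt C w = (dlt C u + 1) mod T" using IA[OF wo] IA[OF uo] h by (simp add: mod_Suc_eq)
        then show ?thesis using F2[OF T4 IB[OF ub]] jw by simp
      qed
    qed
  qed
qed

lemma active_mono: "active T E adv r x \<Longrightarrow> active T E adv (Suc r) x"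
  unfolding active_def using act_old step_inact by (simp add: activate_def step_inact)

theorem mainTheorem9:
  fixes E :: "'v::finite \<Rightarrow> 'v \<Rightarrow> bool"
    and adv :: "nat \<Rightarrow> 'v set"
    and T t :: nat and v :: 'v
  assumes "T \<ge> 4"
    and "\<And>x y. E x y \<Longrightarrow> E y x"
    and "\<And>x. \<not> E x x"
    and "\<And>x y. E\<^sup>*\<^sup>* x y"
    and "v \<in> adv 0"
    and "\<And>w. w \<noteq> v \<Longrightarrow> active T E adv t w \<Longrightarrow> cnt (exec T E adv t) v \<ge> cnt (exec T E adv t) w"
  shows "\<forall>t' > t. \<forall>w. active T E adv t' w \<longrightarrow> cnt (exec T E adv t') v \<ge> cnt (exec T E adv t') w"
proof -
  have act: "active T E adv r v" for r
  proof (induction r)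
    case 0 show ?case using assms(5) unfolding active_def by (simp add: activate_def init_cfg_def)
  next
    case (Suc r) then show ?case by (rule active_mono)
  qed
  have P: "\<forall>w. active T E adv t' w \<longrightarrow> cnt (exec T E adv t') v \<ge> cnt (exec T E adv t') w"
    if "t \<le> t'" for t'
    using that
  proof (induction t' rule: dec_induct)
    case base show ?case
    proof (intro allI impI)
      fix w assume "active T E adv t w"
      then show "cnt (exec T E adv t) w \<le> cnt (exec T E adv t) v"
        using assms(6) by (cases "w = v") auto
    qed
  next
    case (step n)
    show ?case
    proof (intro allI impI)
      fix w assume aw: "active T E adv (Suc n) w"
      let ?a = "\<lambda>x. x \<in> adv (Suc n) \<or> heard E (exec T E adv n) x"
      have "cnt (activate ?a (step T E (exec T E adv n))) w \<le> cnt (activate ?a (step T E (exec T E adv n))) v"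
      proof (rule max_step[OF assms(1) assms(2) inv_exec[OF assms(1) assms(2), where adv=adv and r=n]])
        show "st (exec T E adv n) v \<noteq> Inactive" using act[of n] unfolding active_def .
        show "cnt (exec T E adv n) w' \<le> cnt (exec T E adv n) v" if "st (exec T E adv n) w' \<noteq> Inactive" for w'
          using step.IH that unfolding active_def by blast
        show "st (activate ?a (step T E (exec T E adv n))) w \<noteq> Inactive" using aw unfolding active_def by simp
      qed
      then show "cnt (exec T E adv (Suc n)) w \<le> cnt (exec T E adv (Suc n)) v" by simp
    qed
  qed
  show ?thesis using P by auto
qed

end
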